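(* Let $a,b$ be positive integers with $\gcd(a,b)=1$, let $r\ge1$, let $n>rab$, and let $\lambda$ be an $(a,b;n)$-balanced partition of $rn$. Let $k$ be an integer with $rab\le k\le n-1$ such that $k=rab+au+bv$ for some nonnegative integers $u,v$, and let $S_k=\{(i,j)\in\lambda: ai+bj\equiv k\pmod n\}$. Then $S_k$ is the disjoint union of two sets $A_k$ and $B_k$ such that: (1) if $(i,j)\in A_k$ then either $i<b$ or $(i-b,j+a)\in A_k$; (2) if $(i,j)\in B_k$ then either $j<a$ or $(i+b,j-a)\in B_k$.
   Context: Partitions are Young diagrams: finite sets $\lambda\subset\mathbb{Z}_{\ge0}^2$ such that $(i,j)\in\lambda$ implies $(i',j')\in\lambda$ for $0\le i'\le i$, $0\le j'\le j$. Box $(i,j)$ has color $ai+bj\bmod n$; $\lambda$ is $(a,b;n)$-balanced if each residue class mod $n$ is the color of exactly $r$ boxes of $\lambda$. *)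

theory Defs
  imports Main
begin

definition young_diagram :: "(nat \<times> nat) set \<Rightarrow> bool" where
  "young_diagram lam \<longleftrightarrow> finite lam \<and>
     (\<forall>i j i' j'. (i, j) \<in> lam \<and> i' \<le> i \<and> j' \<le> j \<longrightarrow> (i', j') \<in> lam)"

definition box_color :: "nat \<Rightarrow> nat \<Rightarrow> nat \<Rightarrow> nat \<times> nat \<Rightarrow> nat" where
  "box_color a b n c = (a * fst c + b * snd c) mod n"

definition balanced :: "nat \<Rightarrow> nat \<Rightarrow> nat \<Rightarrow> nat \<Rightarrow> (nat \<times> nat) set \<Rightarrow> bool" where
  "balanced a b n r lam \<longleftrightarrow>
     (\<forall>c < n. card {x \<in> lam. box_color a b n x = c} = r)"

end

theory Submission
  imports Defs
begin

definition Lc :: "(nat \<times> nat) set \<Rightarrow> nat \<Rightarrow> nat \<Rightarrow> nat \<Rightarrow> nat \<Rightarrow> bool" where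
 "Lc lam a b i j \<longleftrightarrow> (\<forall>s. s*b \<le> i \<longrightarrow> (i - s*b, j + s*a) \<in> lam)"
definition Rc :: "(nat \<times> nat) set \<Rightarrow> nat \<Rightarrow> nat \<Rightarrow> nat \<Rightarrow> nat \<Rightarrow> bool" where
 "Rc lam a b i j \<longleftrightarrow> (\<forall>s. s*a \<le> j \<longrightarrow> (i + s*b, j - s*a) \<in> lam)"

lemma W1: "s*a \<le> j \<Longrightarrow> a*(i + s*b) + b*(j - s*a) = a*i + (b::nat)*j"
proof -
  assume h: "s*a \<le> j"
  have "b*(j - s*a) = b*j - b*(s*a)" by (simp add: diff_mult_distrib2)
  moreover have "b*(s*a) \<le> b*j" using h by simp
  moreover have "a*(i+s*b) = a*i + b*(s*a)" by (simp add: algebra_simps)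
  ultimately show ?thesis by simp
qed

lemma W2: "s*b \<le> i \<Longrightarrow> a*(i - s*b) + b*(j + s*a) = a*i + (b::nat)*j"
proof -
  assume h: "s*b \<le> i"
  have "a*(i - s*b) = a*i - a*(s*b)" by (simp add: diff_mult_distrib2)
  moreover have "a*(s*b) \<le> a*i" using h by simp
  moreover have "b*(j+s*a) = b*j + a*(s*b)" by (simp add: algebra_simps)
  ultimately show ?thesis by simp
qed

lemma dcl: "young_diagram lam \<Longrightarrow> (i,j) \<in> lam \<Longrightarrow> i' \<le> i \<Longrightarrow> j' \<le> j \<Longrightarrow> (i',j') \<in> lam"
  unfolding young_diagram_def by blast

lemma modsub: "(w::nat) mod n = k \<Longrightarrow> c \<le> k \<Longrightarrow> k < n \<Longrightarrow> (w - c) mod n = k - c"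
proof -
  assume h: "w mod n = k" "c \<le> k" "k < n"
  have "w = k + n*(w div n)" using h(1) by (metis add.commute div_mult_mod_eq mult.commute)
  hence e: "w - c = (k - c) + n*(w div n)" using h(2) by linarith
  have "((k - c) + n*(w div n)) mod n = k - c" using h(3) by simp
  thus ?thesis using e by simp
qed

lemma RcFwd: "Rc lam a b x y \<Longrightarrow> t*a \<le> y \<Longrightarrow> Rc lam a b (x + t*b) (y - t*a)"
  unfolding Rc_def
proof (intro allI impI)
  fix s assume R: "\<forall>s. s * a \<le> y \<longrightarrow> (x + s * b, y - s * a) \<in> lam" and t: "t*a \<le> y" and s: "s * a \<le> y - t * a"
  have "(s+t)*a \<le> y" using s t by (simp add: algebra_simps)
  hence "(x + (s+t)*b, y - (s+t)*a) \<in> lam" using R by blast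
  moreover have "x + (s+t)*b = x + t*b + s*b" "y - (s+t)*a = y - t*a - s*a" by (simp_all add: algebra_simps)
  ultimately show "(x + t * b + s * b, y - t * a - s * a) \<in> lam" by simp
qed

lemma RcBack: "Rc lam a b x y \<Longrightarrow> (x - b, y + a) \<in> lam \<Longrightarrow> b \<le> x \<Longrightarrow> Rc lam a b (x - b) (y + a)"
  unfolding Rc_def
proof (intro allI impI)
  fix s assume R: "\<forall>s. s * a \<le> y \<longrightarrow> (x + s * b, y - s * a) \<in> lam" and m: "(x - b, y + a) \<in> lam"
    and bx: "b \<le> x" and s: "s * a \<le> y + a"
  show "(x - b + s * b, y + a - s * a) \<in> lam"
  proof (cases s)
    case 0 then show ?thesis using m by simp
  next
    case (Suc s')
    have "s'*a \<le> y" using s Suc by simp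
    hence "(x + s'*b, y - s'*a) \<in> lam" using R by blast
    moreover have "x - b + s*b = x + s'*b" "y + a - s*a = y - s'*a" using Suc bx by simp_all
    ultimately show ?thesis by simp
  qed
qed

lemma Ra: "(x,y) \<in> lam \<Longrightarrow> y < (a::nat) \<Longrightarrow> Rc lam a b x y"
  unfolding Rc_def
proof (intro allI impI)
  fix s assume "(x,y) \<in> lam" "y < a" "s*a \<le> y"
  hence "s = 0" by (metis leD mult_le_mono1 not_less_eq_eq mult_Suc Suc_leI le_add1 le_trans gr0_conv_Suc nat_mult_1 less_le_trans neq0_conv) 
  thus "(x + s * b, y - s * a) \<in> lam" using \<open>(x,y) \<in> lam\<close> by simp
qed

lemma fullline:
  fixes a b r n k u v i j :: nat
  assumes "a>0" "b>0" "gcd a b = 1" "r \<ge> 1" "n > r*a*b" "young_diagram lam"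
   "card {x \<in> lam. box_color a b n x = k} = r" "k < n" "k = r*a*b + a*u + b*v"
   "(i,j) \<in> lam" "(a*i+b*j) mod n = k" "i < b" "Rc lam a b i j"
  shows False
proof -
  have ja: "r*a \<le> j"
  proof (rule ccontr)
    assume jl: "\<not> r*a \<le> j"
    show False
    proof (cases "a*i+b*j < n")
      case True
      then have eq: "a*i+b*j = r*a*b + a*u + b*v" using assms(11,9) by simp
      hence eqi: "int a*int i+int b*int j = int r*int a*int b + int a*int u + int b*int v"
        by (metis of_nat_add of_nat_mult)
      have ieq: "int a * (int i - int u) = int b * (int r * int a + int v - int j)"
        using eqi by (simp add: algebra_simps)
      have "j < r*a" using jl by simp
      hence "int j < int (r*a)" by (simp only: of_nat_less_iff)
      hence pos: "int r * int a + int v - int j > 0" by (simp only: of_nat_mult)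
      have "int b * (int r * int a + int v - int j) > 0" using pos assms(2) by simp
      hence "int a * (int i - int u) > 0" using ieq by simp
      hence pos2: "int i - int u > 0" using assms(1) by (simp add: zero_less_mult_iff)
      have "int b dvd int a * (int i - int u)" using ieq by simp
      moreover have "coprime (int b) (int a)" using assms(3)
        by (metis coprime_iff_gcd_eq_1 coprime_int_iff gcd.commute)
      ultimately have "int b dvd (int i - int u)" using coprime_dvd_mult_right_iff by blast
      hence "int b \<le> int i - int u" using pos2 by (simp add: zdvd_imp_le)
      thus False using assms(12) by linarith
    next
      case False
      have q: "a*i+b*j = k + n*((a*i+b*j) div n)" using assms(11)
        by (metis add.commute div_mult_mod_eq mult.commute)
      have "(a*i+b*j) div n \<ge> 1" using False assms(5)
        by (metis div_greater_zero_iff less_one not_le not_less_zero less_le_trans neq0_conv zero_less_iff_neq_zero gr_zeroI)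
      hence "n*((a*i+b*j) div n) \<ge> n" by simp
      hence ge: "a*i+b*j \<ge> n + k" using q by linarith
      have h1: "b*(j+1) \<le> b*(r*a)" using jl by (intro mult_le_mono2) simp
      have h2: "a*(i+1) \<le> a*b" using assms(12) by (intro mult_le_mono2) simp
      have h3: "a*b \<le> r*a*b" using assms(4) by simp
      have h4: "b*(r*a) = r*a*b" "b*(j+1) = b*j + b" "a*(i+1) = a*i+a" by (simp_all add: algebra_simps)
      have "r*a*b \<le> k" using assms(9) by simp
      then show False using ge h1 h2 h3 h4 assms(5) by linarith
    qed
  qed
  define f where "f s = (i + s*b, j - s*a)" for s
  have inj: "inj_on f {0..r}" unfolding inj_on_def f_def using assms(2) by auto
  have sub: "f ` {0..r} \<subseteq> {x \<in> lam. box_color a b n x = k}"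
  proof
    fix x assume "x \<in> f ` {0..r}"
    then obtain s where s: "s \<le> r" "x = f s" by auto
    have sa: "s*a \<le> j" using s(1) ja by (meson le_trans mult_le_mono1)
    have "x \<in> lam" using assms(13) sa unfolding Rc_def s(2) f_def by blast
    moreover have "box_color a b n x = k" using W1[OF sa] assms(11) unfolding s(2) f_def box_color_def by simp
    ultimately show "x \<in> {x \<in> lam. box_color a b n x = k}" by simp
  qed
  have fin: "finite {x \<in> lam. box_color a b n x = k}" using assms(6) unfolding young_diagram_def by simp
  have "card (f ` {0..r}) \<le> r" using card_mono[OF fin sub] assms(7) by simp
  moreover have "card (f ` {0..r}) = r+1" using card_image[OF inj] by simp
  ultimately show False by simp
qed


lemma key:
  fixes a b r n k u v i j :: nat
  assumes "a>0" "b>0" "gcd a b = 1" "r \<ge> 1" "n > r*a*b" "young_diagram lam"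
   "balanced a b n r lam" "k < n" "k = r*a*b + a*u + b*v"
   "(i,j) \<in> lam" "(a*i+b*j) mod n = k"
  shows "Lc lam a b i j \<or> Rc lam a b i j"
proof (rule ccontr)
  assume "\<not> ?thesis"
  hence nL: "\<not> Lc lam a b i j" and nR: "\<not> Rc lam a b i j" by auto
  let ?S = "{x \<in> lam. box_color a b n x = k}"
  let ?S' = "{x \<in> lam. box_color a b n x = k - a*b}"
  have "a*b \<le> r*a*b" using assms(4) by simp
  hence abk: "a*b \<le> k" using assms(9) by linarith
  have cS: "card ?S = r" using assms(7,8) unfolding balanced_def by blast
  have "k - a*b < n" using assms(8) by linarith
  hence cS': "card ?S' = r" using assms(7) unfolding balanced_def by blast
  have fin': "finite ?S'" using assms(6) unfolding young_diagram_def by simp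
  have Rb: "b \<le> x" if "(x,y) \<in> lam" "(a*x+b*y) mod n = k" "Rc lam a b x y" for x y
  proof (rule ccontr)
    assume "\<not> b \<le> x"
    hence "x < b" by simp
    from fullline[OF assms(1-6) cS assms(8,9) that(1,2) this that(3)] show False .
  qed
  have Ra': "a \<le> y" if "(x,y) \<in> lam" "\<not> Rc lam a b x y" for x y
    using Ra[of x y lam a b] that by (meson not_le)
  define \<psi> where "\<psi> x = (if Rc lam a b (fst x) (snd x) then (fst x - b, snd x) else (fst x, snd x - a))" for x
  have col: "box_color a b n (x,y) = (a*x+b*y) mod n" for x y unfolding box_color_def by simp
  have map: "\<psi> ` ?S \<subseteq> ?S'"
  proof
    fix z assume "z \<in> \<psi> ` ?S"
    then obtain x y where xy: "(x,y) \<in> lam" "(a*x+b*y) mod n = k" "z = \<psi> (x,y)"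
      using col by auto
    show "z \<in> ?S'"
    proof (cases "Rc lam a b x y")
      case True
      have bx: "b \<le> x" using Rb xy True by blast
      have z: "z = (x - b, y)" using xy(3) True unfolding \<psi>_def by simp
      have "(x-b,y) \<in> lam" using dcl[OF assms(6) xy(1)] by simp
      moreover have "a*(x-b)+b*y = (a*x+b*y) - a*b"
        using W2[of 1 b x a y] bx by (simp add: diff_mult_distrib2 algebra_simps)
      moreover have "a*b \<le> a*x+b*y" using bx by (metis add_leD1 mult_le_mono2 mult.commute le_add1 trans_le_add1)
      ultimately show ?thesis using z modsub[OF xy(2) abk assms(8)] col by simp
    next
      case False
      have ay: "a \<le> y" using Ra' xy False by blast
      have z: "z = (x, y - a)" using xy(3) False unfolding \<psi>_def by simp
      have "(x,y-a) \<in> lam" using dcl[OF assms(6) xy(1)] by simp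
      moreover have "a*x+b*(y-a) = (a*x+b*y) - a*b"
        using ay by (simp add: diff_mult_distrib2 algebra_simps)
      moreover have "a*b \<le> a*x+b*y" using ay by (metis mult_le_mono2 mult.commute trans_le_add2)
      ultimately show ?thesis using z modsub[OF xy(2) abk assms(8)] col by simp
    qed
  qed
  have inj: "inj_on \<psi> ?S"
  proof (rule inj_onI)
    fix z1 z2 assume z1: "z1 \<in> ?S" and z2: "z2 \<in> ?S" and e: "\<psi> z1 = \<psi> z2"
    obtain x1 y1 where p1: "z1 = (x1,y1)" by fastforce
    obtain x2 y2 where p2: "z2 = (x2,y2)" by fastforce
    have l1: "(x1,y1) \<in> lam" "(a*x1+b*y1) mod n = k" using z1 p1 col by auto
    have l2: "(x2,y2) \<in> lam" "(a*x2+b*y2) mod n = k" using z2 p2 col by auto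
    have mixed: False if "Rc lam a b x1 y1" "\<not> Rc lam a b x2 y2" "\<psi> (x1,y1) = \<psi> (x2,y2)"
       "(x1,y1) \<in> lam" "(a*x1+b*y1) mod n = k" "(x2,y2) \<in> lam" for x1 y1 x2 y2
    proof -
      have bx: "b \<le> x1" using Rb that by blast
      have ay: "a \<le> y2" using Ra' that by blast
      have "(x1 - b, y1) = (x2, y2 - a)" using that(3) that(1,2) unfolding \<psi>_def by simp
      hence "x2 = x1 - b" "y2 = y1 + a" using ay by auto
      hence "Rc lam a b x2 y2" using RcBack[OF that(1) _ bx] that(6) by simp
      thus False using that(2) by simp
    qed
    show "z1 = z2"
    proof (cases "Rc lam a b x1 y1")
      case True note T1 = True
      show ?thesis
      proof (cases "Rc lam a b x2 y2")
        case True
        have "b \<le> x1" "b \<le> x2" using Rb l1 l2 T1 True by blast+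
        thus ?thesis using e T1 True p1 p2 unfolding \<psi>_def by auto
      next
        case False
        thus ?thesis using mixed[OF T1 False] e p1 p2 l1 l2 by blast
      qed
    next
      case False note F1 = False
      show ?thesis
      proof (cases "Rc lam a b x2 y2")
        case True
        thus ?thesis using mixed[OF True F1] e p1 p2 l1 l2 by metis
      next
        case False
        have "a \<le> y1" "a \<le> y2" using Ra' l1 l2 F1 False by blast+
        thus ?thesis using e F1 False p1 p2 unfolding \<psi>_def by auto
      qed
    qed
  qed
  have ex: "\<exists>s. s*b \<le> i \<and> (i - s*b, j + s*a) \<notin> lam" using nL unfolding Lc_def by blast
  define s0 where "s0 = (LEAST s. s*b \<le> i \<and> (i - s*b, j + s*a) \<notin> lam)"
  have s0: "s0*b \<le> i" "(i - s0*b, j + s0*a) \<notin> lam"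
    using LeastI_ex[OF ex] unfolding s0_def by auto
  have s0min: "(i - s*b, j + s*a) \<in> lam" if "s < s0" "s*b \<le> i" for s
    using not_less_Least[of s "\<lambda>s. s*b \<le> i \<and> (i - s*b, j + s*a) \<notin> lam"] that unfolding s0_def by blast
  have "s0 \<noteq> 0" using s0(2) assms(10) by (cases s0) auto
  then obtain t where st: "s0 = Suc t" by (cases s0) auto
  have tb: "t*b \<le> i" using s0(1) st by simp
  have e1: "(i - t*b, j + t*a) \<in> lam" using s0min[of t] st tb by simp
  define x0 where "x0 = (i - s0*b, j + t*a)"
  have "t*b \<le> s0*b" using st by simp
  hence "i - s0*b \<le> i - t*b" by (rule diff_le_mono2)
  hence x0l: "x0 \<in> lam" unfolding x0_def using dcl[OF assms(6) e1] by simp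
  have w0: "a*(i - s0*b) + b*(j + t*a) + a*b = a*i+b*j"
    using W2[OF s0(1), of a j] st by (simp add: algebra_simps)
  have x0c: "box_color a b n x0 = k - a*b"
  proof -
    have "box_color a b n x0 = (a*i+b*j - a*b) mod n" unfolding x0_def col using w0
      by (metis add_diff_cancel_right')
    also have "\<dots> = k - a*b" using modsub[OF assms(11) abk assms(8)] .
    finally show ?thesis .
  qed
  have x0n: "x0 \<notin> \<psi> ` ?S"
  proof
    assume "x0 \<in> \<psi> ` ?S"
    then obtain x y where xy: "(x,y) \<in> lam" "(a*x+b*y) mod n = k" "x0 = \<psi> (x,y)"
      using col by auto
    show False
    proof (cases "Rc lam a b x y")
      case True
      have bx: "b \<le> x" using Rb xy True by blast
      have "(x - b, y) = (i - s0*b, j + t*a)" using xy(3) True unfolding \<psi>_def x0_def by simp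
      hence "x = i - t*b" "y = j + t*a" using bx s0(1) st by auto
      hence "Rc lam a b (i - t*b) (j + t*a)" using True by simp
      from RcFwd[OF this, of t] have "Rc lam a b (i - t*b + t*b) (j + t*a - t*a)" by simp
      hence "Rc lam a b i j" using tb by simp
      thus False using nR by simp
    next
      case False
      have ay: "a \<le> y" using Ra' xy False by blast
      have "(x, y - a) = (i - s0*b, j + t*a)" using xy(3) False unfolding \<psi>_def x0_def by simp
      hence "x = i - s0*b" "y = j + s0*a" using ay st by auto
      thus False using xy(1) s0(2) by simp
    qed
  qed
  have "insert x0 (\<psi> ` ?S) \<subseteq> ?S'" using map x0l x0c by auto
  from card_mono[OF fin' this] have "card (insert x0 (\<psi> ` ?S)) \<le> r" using cS' by simp
  moreover have "card (insert x0 (\<psi> ` ?S)) = r + 1"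
  proof -
    have "finite (\<psi> ` ?S)" using fin' map by (rule finite_subset[rotated])
    hence "card (insert x0 (\<psi> ` ?S)) = card (\<psi> ` ?S) + 1" using x0n by simp
    also have "card (\<psi> ` ?S) = r" using card_image[OF inj] cS by simp
    finally show ?thesis .
  qed
  ultimately show False by simp
qed


theorem lemma4p1:
  fixes a b r n k :: nat and lam :: "(nat \<times> nat) set"
  assumes "a > 0" and "b > 0" and "gcd a b = 1"
    and "r \<ge> 1" and "n > r * a * b"
    and "young_diagram lam" and "card lam = r * n" and "balanced a b n r lam"
    and "r * a * b \<le> k" and "k \<le> n - 1"
    and "\<exists>u v. k = r * a * b + a * u + b * v"
  shows "\<exists>A B. A \<inter> B = {} \<and> A \<union> B = {x \<in> lam. box_color a b n x = k mod n} \<and>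
           (\<forall>i j. (i, j) \<in> A \<longrightarrow> i < b \<or> (i - b, j + a) \<in> A) \<and>
           (\<forall>i j. (i, j) \<in> B \<longrightarrow> j < a \<or> (i + b, j - a) \<in> B)"
proof -
  obtain u v where uv: "k = r * a * b + a * u + b * v" using assms(11) by blast
  have kn: "k < n" using assms(10) assms(5) by linarith
  hence km: "k mod n = k" by simp
  have col: "box_color a b n (x,y) = (a*x+b*y) mod n" for x y unfolding box_color_def by simp
  let ?S = "{x \<in> lam. box_color a b n x = k mod n}"
  define A where "A = {x \<in> ?S. Lc lam a b (fst x) (snd x)}"
  define B where "B = ?S - A"
  have K: "Lc lam a b i j \<or> Rc lam a b i j" if "(i,j) \<in> lam" "(a*i+b*j) mod n = k" for i j
    using key[OF assms(1-6,8) kn uv that] .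
  have PA: "i < b \<or> (i - b, j + a) \<in> A" if "(i,j) \<in> A" for i j
  proof (cases "i < b")
    case True thus ?thesis by simp
  next
    case False
    have h: "(i,j) \<in> lam" "(a*i+b*j) mod n = k" "Lc lam a b i j" using that km col unfolding A_def by auto
    have b1: "1*b \<le> i" using False by simp
    have "(i - 1*b, j + 1*a) \<in> lam" using h(3) b1 unfolding Lc_def by blast
    moreover have "(a*(i-b)+b*(j+a)) mod n = k" using W2[OF b1, of a j] h(2) by simp
    moreover have "Lc lam a b (i-b) (j+a)" unfolding Lc_def
    proof (intro allI impI)
      fix s assume "s*b \<le> i - b"
      hence "(s+1)*b \<le> i" using False by (simp add: algebra_simps)
      hence "(i - (s+1)*b, j + (s+1)*a) \<in> lam" using h(3) unfolding Lc_def by blast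
      moreover have "(i - (s+1)*b, j + (s+1)*a) = (i - b - s*b, j + a + s*a)" by (simp add: algebra_simps)
      ultimately show "(i - b - s*b, j + a + s*a) \<in> lam" by metis
    qed
    ultimately show ?thesis unfolding A_def using km col by simp
  qed
  have PB: "j < a \<or> (i + b, j - a) \<in> B" if "(i,j) \<in> B" for i j
  proof (cases "j < a")
    case True thus ?thesis by simp
  next
    case False
    have h: "(i,j) \<in> lam" "(a*i+b*j) mod n = k" "\<not> Lc lam a b i j" using that km col unfolding A_def B_def by auto
    have R: "Rc lam a b i j" using K h by blast
    have a1: "1*a \<le> j" using False by simp
    have "(i + 1*b, j - 1*a) \<in> lam" using R a1 unfolding Rc_def by blast
    moreover have "(a*(i+b)+b*(j-a)) mod n = k" using W1[OF a1, of i b] h(2) by simp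
    moreover have "\<not> Lc lam a b (i+b) (j-a)"
    proof
      assume L: "Lc lam a b (i+b) (j-a)"
      have "Lc lam a b i j" unfolding Lc_def
      proof (intro allI impI)
        fix s assume "s*b \<le> i"
        hence "(s+1)*b \<le> i + b" by (simp add: algebra_simps)
        hence "(i + b - (s+1)*b, j - a + (s+1)*a) \<in> lam" using L unfolding Lc_def by blast
        moreover have "i + b - (s+1)*b = i - s*b" "j - a + (s+1)*a = j + s*a" using False by (simp_all add: algebra_simps)
        ultimately show "(i - s*b, j + s*a) \<in> lam" by simp
      qed
      thus False using h(3) by simp
    qed
    ultimately show ?thesis unfolding A_def B_def using km col by simp
  qed
  have "A \<inter> B = {}" "A \<union> B = ?S" unfolding A_def B_def by auto
  thus ?thesis using PA PB by blast
qed

end
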